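(* Let $v\in\mathbb{N}$ and $S\subset\mathbb{N}_0$ finite. (a) If $S$ is up-admissible for $v$, then $S$ is down-admissible for $w=v(S)$ and $v=w[S]$. (b) If $S$ is down-admissible for $v$, then $S$ is up-admissible for $u=v[S]$ and $v=u(S)$.
   Context: Fix a prime $p$; $\mathbb{N}=\{1,2,\dots\}$, $\mathbb{N}_0=\mathbb{N}\cup\{0\}$. For $v\in\mathbb{N}$ write $v=\sum_{i=0}^{j}a_ip^i$ with $0\le a_i\le p-1$, $a_j\ne0$, and $a_i=0$ for $i>j$. A finite $S\subset\mathbb{N}_0$ splits uniquely into maximal subsets of consecutive integers (blocks). $S$ is down-admissible for $v$ if (d1) $a_{\min B}\ne0$ for every block $B$ of $S$ and (d2) $s\in S$, $a_{s+1}=0$ imply $s+1\in S$; then $v[S]:=\sum_i\epsilon_ia_ip^i$ with $\epsilon_i=-1$ for $i\in S$, $\epsilon_i=1$ otherwise. $S$ is up-admissible for $v$ if (u1) $a_{\min B}\ne0$ for every block $B$ of $S$ and (u2) $s\in S$, $a_{s+1}=p-1$ imply $s+1\in S$; then $v(S):=\sum_ka'_kp^k$ with $a'_k=-a_k$ for $k\in S$, $a'_k=a_k+2$ for $k\notin S$, $k-1\in S$, and $a'_k=a_k$ otherwise. Admissibility for $v(S)$ or $v[S]$ refers to the $p$-adic digits of these numbers. *)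

theory Defs
  imports "HOL-Computational_Algebra.Primes"
begin

definition digit :: "nat \<Rightarrow> nat \<Rightarrow> nat \<Rightarrow> nat" where
  "digit p v i = (v div p ^ i) mod p"

definition is_block :: "nat set \<Rightarrow> nat set \<Rightarrow> bool" where
  "is_block S B \<longleftrightarrow> (\<exists>m n. m \<le> n \<and> B = {m..n} \<and> B \<subseteq> S
      \<and> (m = 0 \<or> m - 1 \<notin> S) \<and> Suc n \<notin> S)"

definition down_adm :: "nat \<Rightarrow> nat \<Rightarrow> nat set \<Rightarrow> bool" where
  "down_adm p v S \<longleftrightarrow>
     (\<forall>B. is_block S B \<longrightarrow> digit p v (Min B) \<noteq> 0) \<and>
     (\<forall>s\<in>S. digit p v (Suc s) = 0 \<longrightarrow> Suc s \<in> S)"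

definition up_adm :: "nat \<Rightarrow> nat \<Rightarrow> nat set \<Rightarrow> bool" where
  "up_adm p v S \<longleftrightarrow>
     (\<forall>B. is_block S B \<longrightarrow> digit p v (Min B) \<noteq> 0) \<and>
     (\<forall>s\<in>S. digit p v (Suc s) = p - 1 \<longrightarrow> Suc s \<in> S)"

(* v[S]; digits of v vanish at indices >= v, so summing over {..<v} covers all *)
definition vdown :: "nat \<Rightarrow> nat \<Rightarrow> nat set \<Rightarrow> int" where
  "vdown p v S = (\<Sum>i<v. (if i \<in> S then -1 else 1) * int (digit p v i) * int p ^ i)"

definition upd_digit :: "nat \<Rightarrow> nat \<Rightarrow> nat set \<Rightarrow> nat \<Rightarrow> int" where
  "upd_digit p v S k =
     (if k \<in> S then - int (digit p v k)
      else if k \<noteq> 0 \<and> k - 1 \<in> S then int (digit p v k) + 2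
      else int (digit p v k))"

(* v(S); all nonzero modified digits have index in {..<v} \<union> S \<union> Suc ` S *)
definition vup :: "nat \<Rightarrow> nat \<Rightarrow> nat set \<Rightarrow> int" where
  "vup p v S = (\<Sum>k \<in> {..<v} \<union> S \<union> Suc ` S. upd_digit p v S k * int p ^ k)"

end

theory Submission
  imports Defs
begin

lemma digit_Suc: "p > 0 \<Longrightarrow> digit p v (Suc k) = digit p (v div p) k"
  by (simp add: digit_def div_mult2_eq)

lemma digit_zero_big: assumes "p \<ge> 2" "v \<le> k" shows "digit p v k = 0"
proof -
  have "v < 2 ^ k" using assms(2) less_exp[of k] by linarith
  also have "\<dots> \<le> p ^ k" using assms(1) by (simp add: power_mono)
  finally show ?thesis by (simp add: digit_def)
qed

lemma digit_lt: "p \<ge> 2 \<Longrightarrow> digit p v k < p"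
  by (simp add: digit_def)

lemma expand: assumes "p \<ge> 2" "v < p ^ L"
  shows "v = (\<Sum>k<L. digit p v k * p ^ k)"
  using assms(2)
proof (induction L arbitrary: v)
  case 0 then show ?case by simp
next
  case (Suc L)
  have "v div p < p ^ L" using Suc.prems assms(1)
    by (simp add: less_mult_imp_div_less mult.commute)
  then have IH: "v div p = (\<Sum>k<L. digit p (v div p) k * p ^ k)" by (rule Suc.IH)
  have "(\<Sum>k<Suc L. digit p v k * p ^ k) = digit p v 0 + (\<Sum>k<L. digit p v (Suc k) * p ^ Suc k)"
    by (simp only: sum.lessThan_Suc_shift) simp
  also have "\<dots> = v mod p + p * (\<Sum>k<L. digit p (v div p) k * p ^ k)"
    using assms(1) by (simp add: digit_Suc sum_distrib_left mult_ac digit_def[of p v 0])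
  also have "\<dots> = v" using IH by simp
  finally show ?case by simp
qed

lemma digits_of_sum: assumes "p \<ge> 2" "\<forall>k. f k < p" "\<forall>k\<ge>L. f k = 0"
  shows "digit p (\<Sum>k<L. f k * p ^ k) i = f i"
  using assms(2,3)
proof (induction i arbitrary: f L)
  case 0
  note pr = "0"
  show ?case
  proof (cases L)
    case 0 then show ?thesis using pr by (simp add: digit_def)
  next
    case (Suc M)
    have "(\<Sum>k<L. f k * p ^ k) = f 0 + p * (\<Sum>k<M. f (Suc k) * p ^ k)"
      unfolding Suc by (simp only: sum.lessThan_Suc_shift) (simp add: sum_distrib_left mult_ac)
    then show ?thesis using pr by (simp add: digit_def)
  qed
next
  case (Suc i)
  show ?case
  proof (cases L)
    case 0 then show ?thesis using Suc by (simp add: digit_def)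
  next
    case (Suc M)
    have e: "(\<Sum>k<L. f k * p ^ k) = f 0 + p * (\<Sum>k<M. f (Suc k) * p ^ k)"
      unfolding Suc by (simp only: sum.lessThan_Suc_shift) (simp add: sum_distrib_left mult_ac)
    have d: "(f 0 + p * X) div p = X" for X using Suc.prems assms(1) by simp
    have "digit p (\<Sum>k<L. f k * p ^ k) (Suc i) = digit p (\<Sum>k<M. f (Suc k) * p ^ k) i"
      using assms(1) by (simp add: digit_Suc e d)
    also have "\<dots> = f (Suc i)"
      using Suc.IH[of "\<lambda>k. f (Suc k)" M] Suc.prems \<open>L = Suc M\<close> by simp
    finally show ?thesis .
  qed
qed


definition tup :: "nat \<Rightarrow> nat set \<Rightarrow> (nat \<Rightarrow> nat) \<Rightarrow> nat \<Rightarrow> nat" where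
  "tup p S x k = (if k \<in> S then (if k = 0 \<or> k - 1 \<notin> S then p - x k else p - 1 - x k)
     else if k \<noteq> 0 \<and> k - 1 \<in> S then x k + 1 else x k)"

definition tdown :: "nat \<Rightarrow> nat set \<Rightarrow> (nat \<Rightarrow> nat) \<Rightarrow> nat \<Rightarrow> nat" where
  "tdown p S x k = (if k \<in> S then (if k = 0 \<or> k - 1 \<notin> S then p - x k else p - 1 - x k)
     else if k \<noteq> 0 \<and> k - 1 \<in> S then x k - 1 else x k)"

definition dd :: "nat \<Rightarrow> nat set \<Rightarrow> nat \<Rightarrow> int" where
  "dd p S k = (if k \<in> S then - (int p ^ Suc k) else 0) + (if k \<noteq> 0 \<and> k - 1 \<in> S then int p ^ k else 0)"

lemma upd_id: assumes "digit p N k = x k" "x k < p"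
  shows "upd_digit p N S k * int p ^ k = int (tup p S x k) * int p ^ k + dd p S k"
proof -
  have e: "int p ^ Suc k = int p * int p ^ k" by simp
  consider (a) "k \<in> S" "k = 0 \<or> k - 1 \<notin> S" | (b) "k \<in> S" "k \<noteq> 0" "k - 1 \<in> S"
    | (c) "k \<notin> S" "k \<noteq> 0" "k - 1 \<in> S" | (d) "k \<notin> S" "\<not> (k \<noteq> 0 \<and> k - 1 \<in> S)" by blast
  then show ?thesis
  proof cases
    case a
    then have "int (p - x k) = int p - int (x k)" using assms by simp
    then show ?thesis using a assms unfolding upd_digit_def tup_def dd_def e
      by (simp add: algebra_simps)
  next
    case b
    then have "int (p - 1 - x k) = int p - 1 - int (x k)" using assms by simp
    then show ?thesis using b assms unfolding upd_digit_def tup_def dd_def e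
      by (simp add: algebra_simps)
  next
    case c
    then show ?thesis using assms unfolding upd_digit_def tup_def dd_def
      by (simp add: algebra_simps)
  next
    case d
    then show ?thesis using assms unfolding upd_digit_def tup_def dd_def
      by (simp add: algebra_simps)
  qed
qed

lemma sgn_id: assumes "digit p M k = tup p S x k" "x k < p"
  shows "(if k \<in> S then -1 else 1) * int (digit p M k) * int p ^ k = int (x k) * int p ^ k + dd p S k"
proof -
  have e: "int p ^ Suc k = int p * int p ^ k" by simp
  consider (a) "k \<in> S" "k = 0 \<or> k - 1 \<notin> S" | (b) "k \<in> S" "k \<noteq> 0" "k - 1 \<in> S"
    | (c) "k \<notin> S" "k \<noteq> 0" "k - 1 \<in> S" | (d) "k \<notin> S" "\<not> (k \<noteq> 0 \<and> k - 1 \<in> S)" by blast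
  then show ?thesis
  proof cases
    case a
    then have "int (p - x k) = int p - int (x k)" using assms by simp
    then show ?thesis using a assms unfolding tup_def dd_def e
      by (simp add: algebra_simps)
  next
    case b
    then have "int (p - 1 - x k) = int p - 1 - int (x k)" using assms by simp
    then show ?thesis using b assms unfolding tup_def dd_def e
      by (simp add: algebra_simps)
  next
    case c
    then show ?thesis using assms unfolding tup_def dd_def
      by (simp add: algebra_simps)
  next
    case d
    then show ?thesis using assms unfolding tup_def dd_def
      by (simp add: algebra_simps)
  qed
qed

lemma dd_sum: assumes "finite S" "S \<union> Suc ` S \<subseteq> {..<L}"
  shows "(\<Sum>k<L. dd p S k) = 0"
proof -
  have SL: "{..<L} \<inter> S = S" using assms(2) by blast
  have 1: "(\<Sum>k<L. (if k \<in> S then - (int p ^ Suc k) else 0)) = - (\<Sum>k\<in>S. int p ^ Suc k)"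
    by (simp only: sum.inter_restrict[symmetric] SL finite_lessThan sum_negf)
  have s: "{k \<in> {..<L}. k \<noteq> 0 \<and> k - 1 \<in> S} = Suc ` S"
  proof
    show "Suc ` S \<subseteq> {k \<in> {..<L}. k \<noteq> 0 \<and> k - 1 \<in> S}" using assms(2) by auto
    show "{k \<in> {..<L}. k \<noteq> 0 \<and> k - 1 \<in> S} \<subseteq> Suc ` S"
    proof
      fix k assume "k \<in> {k \<in> {..<L}. k \<noteq> 0 \<and> k - 1 \<in> S}"
      then have "k = Suc (k - 1)" "k - 1 \<in> S" by auto
      then show "k \<in> Suc ` S" by (metis imageI)
    qed
  qed
  have 2: "(\<Sum>k<L. (if k \<noteq> 0 \<and> k - 1 \<in> S then int p ^ k else 0)) = (\<Sum>k\<in>S. int p ^ Suc k)"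
  proof -
    have "(\<Sum>k<L. (if k \<noteq> 0 \<and> k - 1 \<in> S then int p ^ k else 0)) = (\<Sum>k\<in>{k \<in> {..<L}. k \<noteq> 0 \<and> k - 1 \<in> S}. int p ^ k)"
      by (rule sum.inter_filter[symmetric]) simp
    also have "\<dots> = (\<Sum>k\<in>Suc ` S. int p ^ k)" by (simp only: s)
    also have "\<dots> = (\<Sum>k\<in>S. int p ^ Suc k)" by (simp add: sum.reindex)
    finally show ?thesis .
  qed
  show ?thesis unfolding dd_def sum.distrib 1 2 by simp
qed

lemma sum_eq_supp: assumes "finite A" "finite B" "\<forall>x\<in>A - B. f x = 0" "\<forall>x\<in>B - A. f x = 0"
  shows "sum f A = sum f B"
proof -
  have "sum f A = sum f (A \<union> B)" using assms by (intro sum.mono_neutral_left) auto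
  also have "\<dots> = sum f B" using assms by (intro sum.mono_neutral_right) auto
  finally show ?thesis .
qed

lemma block_ex: assumes "finite S" "m \<in> S" "m = 0 \<or> m - 1 \<notin> S"
  shows "\<exists>B. is_block S B \<and> Min B = m"
proof -
  define n where "n = (LEAST n. m \<le> n \<and> Suc n \<notin> S)"
  define M where "M = Max (insert m S)"
  have "m \<le> M \<and> Suc M \<notin> S"
  proof -
    have "x \<le> M" if "x \<in> insert m S" for x using assms(1) that unfolding M_def by simp
    then show ?thesis by fastforce
  qed
  then have ex: "\<exists>n. m \<le> n \<and> Suc n \<notin> S" by blast
  have n1: "m \<le> n" "Suc n \<notin> S" using LeastI_ex[OF ex] unfolding n_def by auto
  have n2: "Suc j \<in> S" if "m \<le> j" "j < n" for j
    using not_less_Least[of j "\<lambda>n. m \<le> n \<and> Suc n \<notin> S"] that unfolding n_def by blast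
  have sub: "{m..n} \<subseteq> S"
  proof
    fix i assume i: "i \<in> {m..n}"
    show "i \<in> S"
    proof (cases "i = m")
      case True then show ?thesis using assms(2) by simp
    next
      case False
      then have "i = Suc (i - 1)" "m \<le> i - 1" "i - 1 < n" using i by auto
      then show ?thesis using n2[of "i - 1"] by metis
    qed
  qed
  have "is_block S {m..n}" unfolding is_block_def using n1 sub assms(3) by blast
  moreover have "Min {m..n} = m" using n1 by (intro Min_eqI) auto
  ultimately show ?thesis by blast
qed

theorem lemma2p14:
  fixes p v :: nat and S :: "nat set"
  assumes "prime p" and "v \<ge> 1" and "finite S"
  shows "(up_adm p v S \<longrightarrow>
            (\<exists>w::nat. w \<ge> 1 \<and> int w = vup p v S \<and> down_adm p w S \<and> int v = vdown p w S))
       \<and> (down_adm p v S \<longrightarrow>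
            (\<exists>u::nat. u \<ge> 1 \<and> int u = vdown p v S \<and> up_adm p u S \<and> int v = vup p u S))"
proof -
  have p2: "p \<ge> 2" using assms(1) prime_ge_2_nat by blast
  define a where "a = digit p v"
  have a_lt: "a k < p" for k unfolding a_def using digit_lt[OF p2] .
  have a_big: "a k = 0" if "v \<le> k" for k unfolding a_def using digit_zero_big[OF p2 that] .
  have "finite (S \<union> Suc ` S \<union> {..<v})" using assms(3) by simp
  then obtain L where "\<forall>n\<in>S \<union> Suc ` S \<union> {..<v}. n < L"
    unfolding finite_nat_set_iff_bounded by blast
  then have L: "S \<union> Suc ` S \<union> {..<v} \<subseteq> {..<L}" by blast
  have vL: "v \<le> L"
  proof (rule ccontr)
    assume "\<not> v \<le> L"
    then have "L \<in> S \<union> Suc ` S \<union> {..<v}" by simp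
    from subsetD[OF L this] show False by simp
  qed
  have "v < 2 ^ L" using vL less_exp[of L] by linarith
  also have "\<dots> \<le> p ^ L" using p2 by (simp add: power_mono)
  finally have "v = (\<Sum>k<L. a k * p ^ k)" unfolding a_def by (rule expand[OF p2])
  then have "int v = int (\<Sum>k<L. a k * p ^ k)" by simp
  also have "\<dots> = (\<Sum>k<L. int (a k) * int p ^ k)" by (simp add: of_nat_sum)
  finally have v_exp: "int v = (\<Sum>k<L. int (a k) * int p ^ k)" .
  have SS: "S \<subseteq> {..<L}" and SSuc: "Suc ` S \<subseteq> {..<L}" using L by blast+
  have SL: "S \<union> Suc ` S \<subseteq> {..<L}" using SS SSuc by (rule Un_least)
  have notSuc: "\<not> (k \<noteq> 0 \<and> k - 1 \<in> S)" if "k \<notin> Suc ` S" for k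
  proof
    assume "k \<noteq> 0 \<and> k - 1 \<in> S"
    then have "Suc (k - 1) \<in> Suc ` S" "Suc (k - 1) = k" by (blast, simp)
    then show False using that by simp
  qed
  have out: "k \<notin> S \<and> \<not> (k \<noteq> 0 \<and> k - 1 \<in> S) \<and> v \<le> k" if "L \<le> k" for k
  proof -
    have "k \<notin> {..<L}" using that by simp
    then have "k \<notin> S" "k \<notin> Suc ` S" using SS SSuc by blast+
    then show ?thesis using notSuc[of k] vL that by simp
  qed
  have start_nz: "a m \<noteq> 0" if H: "up_adm p v S \<or> down_adm p v S" "m \<in> S" "m = 0 \<or> m - 1 \<notin> S" for m
  proof -
    obtain B where B: "is_block S B" "Min B = m" using block_ex[OF assms(3) H(2,3)] by blast
    have "\<forall>B. is_block S B \<longrightarrow> digit p v (Min B) \<noteq> 0"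
      using H(1) unfolding up_adm_def down_adm_def by (elim disjE conjE) assumption+
    then have "digit p v (Min B) \<noteq> 0" using B(1) by simp
    with B(2) show ?thesis unfolding a_def by simp
  qed
  have blk: "Min B \<in> S \<and> (Min B = 0 \<or> Min B - 1 \<notin> S)" if HB: "is_block S B" for B
  proof -
    obtain m n where "m \<le> n" "B = {m..n}" "B \<subseteq> S" "m = 0 \<or> m - 1 \<notin> S"
      using HB unfolding is_block_def by blast
    moreover then have "Min B = m" by (intro Min_eqI) auto
    ultimately show ?thesis by auto
  qed
  show ?thesis
  proof (intro conjI impI)
    assume up: "up_adm p v S"
    define b where "b = tup p S a"
    have b_lt: "\<forall>k. b k < p"
    proof
      fix k
      have "a k \<noteq> p - 1" if "k \<notin> S" "k \<noteq> 0" "k - 1 \<in> S"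
        using up that unfolding up_adm_def a_def by (metis Suc_pred' not_gr_zero)
      then show "b k < p" unfolding b_def tup_def using a_lt[of k] start_nz[of k] up p2 by auto
    qed
    have b_big: "\<forall>k\<ge>L. b k = 0" using out a_big unfolding b_def tup_def by auto
    define w where "w = (\<Sum>k<L. b k * p ^ k)"
    have dw: "digit p w i = b i" for i unfolding w_def using digits_of_sum[OF p2 b_lt b_big] .
    have w_int: "int w = (\<Sum>k<L. int (b k) * int p ^ k)" unfolding w_def by simp
    have c1: "int w = vup p v S"
    proof -
      have "vup p v S = (\<Sum>k<L. upd_digit p v S k * int p ^ k)"
        unfolding vup_def
      proof (rule sum_eq_supp)
        show "\<forall>x\<in>{..<v} \<union> S \<union> Suc ` S - {..<L}. upd_digit p v S x * int p ^ x = 0"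
          using L by auto
        show "\<forall>x\<in>{..<L} - ({..<v} \<union> S \<union> Suc ` S). upd_digit p v S x * int p ^ x = 0"
          using notSuc a_big unfolding upd_digit_def a_def by auto
      qed (use assms(3) in auto)
      also have "\<dots> = (\<Sum>k<L. int (b k) * int p ^ k + dd p S k)"
        using upd_id[of p v _ a S] a_lt unfolding a_def b_def by simp
      also have "\<dots> = int w" unfolding sum.distrib dd_sum[OF assms(3) SL] w_int by simp
      finally show ?thesis by simp
    qed
    have c3: "int v = vdown p w S"
    proof -
      have "vdown p w S = (\<Sum>i<L. (if i \<in> S then -1 else 1) * int (digit p w i) * int p ^ i)"
        unfolding vdown_def
      proof (rule sum_eq_supp)
        show "\<forall>x\<in>{..<w} - {..<L}. (if x \<in> S then -1 else 1) * int (digit p w x) * int p ^ x = 0"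
          using dw b_big by auto
        show "\<forall>x\<in>{..<L} - {..<w}. (if x \<in> S then -1 else 1) * int (digit p w x) * int p ^ x = 0"
          using digit_zero_big[OF p2] by auto
      qed auto
      also have "\<dots> = (\<Sum>k<L. int (a k) * int p ^ k + dd p S k)"
        using sgn_id[of p w _ S a] a_lt dw unfolding b_def by simp
      also have "\<dots> = int v" unfolding sum.distrib dd_sum[OF assms(3) SL] v_exp by simp
      finally show ?thesis by simp
    qed
    have c2: "down_adm p w S"
      unfolding down_adm_def
    proof (intro conjI allI impI ballI)
      fix B assume "is_block S B"
      then show "digit p w (Min B) \<noteq> 0" using blk[of B] a_lt[of "Min B"]
        unfolding dw b_def tup_def by auto
    next
      fix s assume "s \<in> S" "digit p w (Suc s) = 0"
      then show "Suc s \<in> S" unfolding dw b_def tup_def by (auto split: if_splits)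
    qed
    have c0: "w \<ge> 1"
    proof (rule ccontr)
      assume "\<not> 1 \<le> w"
      then have "w = 0" by simp
      then have "vdown p w S = 0" unfolding vdown_def by simp
      then show False using c3 assms(2) by simp
    qed
    show "\<exists>w::nat. w \<ge> 1 \<and> int w = vup p v S \<and> down_adm p w S \<and> int v = vdown p w S"
      using c0 c1 c2 c3 by blast
  next
    assume dn: "down_adm p v S"
    define c where "c = tdown p S a"
    have after_nz: "a k \<noteq> 0" if "k \<notin> S" "k \<noteq> 0" "k - 1 \<in> S" for k
      using dn that unfolding down_adm_def a_def by (metis Suc_pred' not_gr_zero)
    have c_lt: "\<forall>k. c k < p"
    proof
      fix k
      show "c k < p" unfolding c_def tdown_def using a_lt[of k] start_nz[of k] dn p2 by auto
    qed
    have c_big: "\<forall>k\<ge>L. c k = 0" using out a_big unfolding c_def tdown_def by auto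
    have tc: "tup p S c k = a k" for k
      using a_lt[of k] start_nz[of k] dn after_nz[of k] unfolding c_def tdown_def tup_def by auto
    define u where "u = (\<Sum>k<L. c k * p ^ k)"
    have du: "digit p u i = c i" for i unfolding u_def using digits_of_sum[OF p2 c_lt c_big] .
    have u_int: "int u = (\<Sum>k<L. int (c k) * int p ^ k)" unfolding u_def by simp
    have c1: "int u = vdown p v S"
    proof -
      have "vdown p v S = (\<Sum>i<L. (if i \<in> S then -1 else 1) * int (digit p v i) * int p ^ i)"
        unfolding vdown_def
        by (rule sum_eq_supp) (use vL digit_zero_big[OF p2] in auto)
      also have "\<dots> = (\<Sum>k<L. int (c k) * int p ^ k + dd p S k)"
        using sgn_id[of p v _ S c] c_lt tc unfolding a_def by simp
      also have "\<dots> = int u" unfolding sum.distrib dd_sum[OF assms(3) SL] u_int by simp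
      finally show ?thesis by simp
    qed
    have c3: "int v = vup p u S"
    proof -
      have "vup p u S = (\<Sum>k<L. upd_digit p u S k * int p ^ k)"
        unfolding vup_def
      proof (rule sum_eq_supp)
        show "\<forall>x\<in>{..<u} \<union> S \<union> Suc ` S - {..<L}. upd_digit p u S x * int p ^ x = 0"
          using L du c_big unfolding upd_digit_def by auto
        show "\<forall>x\<in>{..<L} - ({..<u} \<union> S \<union> Suc ` S). upd_digit p u S x * int p ^ x = 0"
          using notSuc digit_zero_big[OF p2] unfolding upd_digit_def by auto
      qed (use assms(3) in auto)
      also have "\<dots> = (\<Sum>k<L. int (a k) * int p ^ k + dd p S k)"
        using upd_id[of p u _ c S] c_lt du tc by simp
      also have "\<dots> = int v" unfolding sum.distrib dd_sum[OF assms(3) SL] v_exp by simp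
      finally show ?thesis by simp
    qed
    have c2: "up_adm p u S"
      unfolding up_adm_def
    proof (intro conjI allI impI ballI)
      fix B assume "is_block S B"
      then show "digit p u (Min B) \<noteq> 0" using blk[of B] a_lt[of "Min B"]
        unfolding du c_def tdown_def by auto
    next
      fix s assume "s \<in> S" "digit p u (Suc s) = p - 1"
      then show "Suc s \<in> S" using a_lt[of "Suc s"] p2 unfolding du c_def tdown_def
        by (auto split: if_splits)
    qed
    have c0: "u \<ge> 1"
    proof (cases "S = {}")
      case True
      then have "c = a" unfolding c_def tdown_def by auto
      then have "u = v" using v_exp u_int by simp
      then show ?thesis using assms(2) by simp
    next
      case False
      define m where "m = Min S"
      have m1: "m \<in> S" using False assms(3) unfolding m_def by (rule Min_in[rotated])
      have m2: "m = 0 \<or> m - 1 \<notin> S"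
      proof (rule ccontr)
        assume "\<not> (m = 0 \<or> m - 1 \<notin> S)"
        then have "m - 1 \<in> S" "m \<noteq> 0" by auto
        then have "m \<le> m - 1" unfolding m_def using assms(3) Min_le by blast
        then show False using \<open>m \<noteq> 0\<close> by simp
      qed
      note m = m1 m2
      have "c m \<noteq> 0" using m a_lt[of m] unfolding c_def tdown_def by auto
      then have "u \<noteq> 0" using du[of m] unfolding digit_def by (metis div_0 mod_0)
      then show ?thesis by simp
    qed
    show "\<exists>u::nat. u \<ge> 1 \<and> int u = vdown p v S \<and> up_adm p u S \<and> int v = vup p u S"
      using c0 c1 c2 c3 by blast
  qed
qed

end
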